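(* Let $n\ge 1$, let $\mathcal{D}\subseteq\mathbb{R}^{2n+1}$ be open and let $F:\mathcal{D}\to\mathbb{R}$ be twice continuously differentiable. Write $\theta=(\mathbf{c},\mathbf{b})$ with $\mathbf{c}\in\mathbb{R}^{n+1}$, $\mathbf{b}\in\mathbb{R}^n$, and partition the Hessian as $$\nabla^2_\theta F(\theta)=\begin{pmatrix}\mathcal{H}_{11}(\theta)&\mathcal{H}_{12}(\theta)\\ \mathcal{H}_{21}(\theta)&\mathcal{H}_{22}(\theta)\end{pmatrix},\quad \mathcal{H}_{11}=\nabla^2_{\mathbf{c}\mathbf{c}}F,\ \mathcal{H}_{12}=\nabla^2_{\mathbf{c}\mathbf{b}}F,\ \mathcal{H}_{21}=\nabla^2_{\mathbf{b}\mathbf{c}}F,\ \mathcal{H}_{22}=\nabla^2_{\mathbf{b}\mathbf{b}}F.$$ Let $\mathcal{O}\subseteq\mathcal{D}$ be an open set on which the invertibility assumption holds for the chosen scheme, and let $G=(G_1,G_2):\mathcal{O}\to\mathbb{R}^{2n+1}$ be the block Newton map of either the L-GS or the NL-GS scheme (defined in the context). Let $\theta^*\in\mathcal{O}$ be a fixed point of $G$ and assume that $\nabla^2_\theta F(\theta^* )$ is symmetric positive definite. Then $G$ is differentiable at $\theta^*$ with Jacobian $$\mathbf{J}_G(\theta^* )=I_{2n+1}-B(\theta^* )^{-1}\nabla^2_\theta F(\theta^* ),\qquad B(\theta)=\begin{pmatrix}\mathcal{H}_{11}(\theta)&\mathbf{0}\\ \mathcal{H}_{21}(\theta)&\mathc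al{H}_{22}(\theta)\end{pmatrix}.$$
   Context: Block Newton maps. For $\theta=(\mathbf{c},\mathbf{b})$ define $G_1(\theta)=\mathbf{c}-\mathcal{H}_{11}(\theta)^{-1}\nabla_{\mathbf{c}}F(\theta)$. For the NL-GS (block nonlinear Gauss–Seidel) scheme, $G_2(\theta)=\mathbf{b}-\mathcal{H}_{22}(G_1(\theta),\mathbf{b})^{-1}\nabla_{\mathbf{b}}F(G_1(\theta),\mathbf{b})$. For the L-GS (block linear Gauss–Seidel) scheme, $G_2(\theta)=\mathbf{b}-\mathcal{H}_{22}(\theta)^{-1}\big(\nabla_{\mathbf{b}}F(\theta)+\mathcal{H}_{21}(\theta)(G_1(\theta)-\mathbf{c})\big)$. Then $G(\theta)=(G_1(\theta),G_2(\theta))$. Invertibility assumption on $\mathcal{O}$: for every $\theta=(\mathbf{c},\mathbf{b})\in\mathcal{O}$, $\mathcal{H}_{11}(\theta)$ is invertible, and moreover $\mathcal{H}_{22}(G_1(\theta),\mathbf{b})$ is invertible (with $(G_1(\theta),\mathbf{b})\in\mathcal{D}$) for NL-GS, respectively $\mathcal{H}_{22}(\theta)$ is invertible for L-GS. $I_{2n+1}$ is the identity matrix of order $2n+1$. *)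

theory Defs
  imports "HOL-Analysis.Analysis"
begin

text \<open>Parameter vectors theta in R^(2n+1) are modelled as real^('c + 'b), where the
  index type 'c (card n+1) indexes the block c and 'b (card n) indexes the block b.\<close>

definition cpart :: "real^('c::finite + 'b::finite) \<Rightarrow> real^'c" where
  "cpart th = (\<chi> i. th $ Inl i)"

definition bpart :: "real^('c::finite + 'b::finite) \<Rightarrow> real^'b" where
  "bpart th = (\<chi> j. th $ Inr j)"

definition join :: "real^'c::finite \<Rightarrow> real^'b::finite \<Rightarrow> real^('c + 'b)" where
  "join c b = (\<chi> k. case k of Inl i \<Rightarrow> c $ i | Inr j \<Rightarrow> b $ j)"

definition C2_on :: "'a::euclidean_space set \<Rightarrow> ('a \<Rightarrow> real) \<Rightarrow> bool" where
  "C2_on D F \<longleftrightarrow> (\<exists>(F' :: 'a \<Rightarrow> 'a \<Rightarrow>\<^sub>L real) (F'' :: 'a \<Rightarrow> 'a \<Rightarrow>\<^sub>L ('a \<Rightarrow>\<^sub>L real)).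
      (\<forall>x\<in>D. (F has_derivative blinfun_apply (F' x)) (at x) \<and>
               (F' has_derivative blinfun_apply (F'' x)) (at x)) \<and>
      continuous_on D F'')"

definition pd :: "'n::finite \<Rightarrow> (real^'n \<Rightarrow> real) \<Rightarrow> real^'n \<Rightarrow> real" where
  "pd k f x = deriv (\<lambda>t. f (x + t *\<^sub>R axis k 1)) 0"

definition grad :: "(real^'n::finite \<Rightarrow> real) \<Rightarrow> real^'n \<Rightarrow> real^'n" where
  "grad F x = (\<chi> k. pd k F x)"

definition hess :: "(real^'n::finite \<Rightarrow> real) \<Rightarrow> real^'n \<Rightarrow> real^'n^'n" where
  "hess F x = (\<chi> k l. pd l (\<lambda>y. pd k F y) x)"

definition grad_c :: "(real^('c::finite + 'b::finite) \<Rightarrow> real) \<Rightarrow> real^('c + 'b) \<Rightarrow> real^'c" where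
  "grad_c F th = cpart (grad F th)"

definition grad_b :: "(real^('c::finite + 'b::finite) \<Rightarrow> real) \<Rightarrow> real^('c + 'b) \<Rightarrow> real^'b" where
  "grad_b F th = bpart (grad F th)"

definition H11 :: "(real^('c::finite + 'b::finite) \<Rightarrow> real) \<Rightarrow> real^('c + 'b) \<Rightarrow> real^'c^'c" where
  "H11 F th = (\<chi> i j. hess F th $ Inl i $ Inl j)"

definition H12 :: "(real^('c::finite + 'b::finite) \<Rightarrow> real) \<Rightarrow> real^('c + 'b) \<Rightarrow> real^'b^'c" where
  "H12 F th = (\<chi> i j. hess F th $ Inl i $ Inr j)"

definition H21 :: "(real^('c::finite + 'b::finite) \<Rightarrow> real) \<Rightarrow> real^('c + 'b) \<Rightarrow> real^'c^'b" where
  "H21 F th = (\<chi> i j. hess F th $ Inr i $ Inl j)"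

definition H22 :: "(real^('c::finite + 'b::finite) \<Rightarrow> real) \<Rightarrow> real^('c + 'b) \<Rightarrow> real^'b^'b" where
  "H22 F th = (\<chi> i j. hess F th $ Inr i $ Inr j)"

definition Bmat :: "(real^('c::finite + 'b::finite) \<Rightarrow> real) \<Rightarrow> real^('c + 'b) \<Rightarrow> real^('c + 'b)^('c + 'b)" where
  "Bmat F th = (\<chi> k l. case (k, l) of (Inl i, Inr j) \<Rightarrow> 0 | _ \<Rightarrow> hess F th $ k $ l)"

datatype scheme = LGS | NLGS

definition G1 :: "(real^('c::finite + 'b::finite) \<Rightarrow> real) \<Rightarrow> real^('c + 'b) \<Rightarrow> real^'c" where
  "G1 F th = cpart th - matrix_inv (H11 F th) *v grad_c F th"

fun G2 :: "scheme \<Rightarrow> (real^('c::finite + 'b::finite) \<Rightarrow> real) \<Rightarrow> real^('c + 'b) \<Rightarrow> real^'b" where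
  "G2 NLGS F th = bpart th - matrix_inv (H22 F (join (G1 F th) (bpart th)))
        *v grad_b F (join (G1 F th) (bpart th))"
| "G2 LGS F th = bpart th - matrix_inv (H22 F th)
        *v (grad_b F th + H21 F th *v (G1 F th - cpart th))"

definition Gmap :: "scheme \<Rightarrow> (real^('c::finite + 'b::finite) \<Rightarrow> real) \<Rightarrow> real^('c + 'b) \<Rightarrow> real^('c + 'b)" where
  "Gmap s F th = join (G1 F th) (G2 s F th)"

fun inv_assm :: "scheme \<Rightarrow> (real^('c::finite + 'b::finite) \<Rightarrow> real) \<Rightarrow> (real^('c + 'b)) set \<Rightarrow> (real^('c + 'b)) set \<Rightarrow> bool" where
  "inv_assm NLGS F D Os \<longleftrightarrow> (\<forall>th\<in>Os. invertible (H11 F th) \<and>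
       join (G1 F th) (bpart th) \<in> D \<and> invertible (H22 F (join (G1 F th) (bpart th))))"
| "inv_assm LGS F D Os \<longleftrightarrow> (\<forall>th\<in>Os. invertible (H11 F th) \<and> invertible (H22 F th))"

definition sym_pos_def :: "real^'n::finite^'n \<Rightarrow> bool" where
  "sym_pos_def A \<longleftrightarrow> transpose A = A \<and> (\<forall>x. x \<noteq> 0 \<longrightarrow> x \<bullet> (A *v x) > 0)"

end

theory Submission imports Defs begin

lemma minv:
  fixes A :: "real^'n::finite^'n"
  assumes "invertible A"
  shows "A ** matrix_inv A = mat 1" "matrix_inv A ** A = mat 1"
  using someI_ex[OF assms[unfolded invertible_def]] unfolding matrix_inv_def by auto

lemma tendsto_det:
  fixes f :: "'x \<Rightarrow> real^'n::finite^'n"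
  assumes "(f \<longlongrightarrow> A) F"
  shows "((\<lambda>x. det (f x)) \<longlongrightarrow> det A) F"
  unfolding det_def by (intro tendsto_intros assms)

lemma minv_formula:
  fixes B :: "real^'n::finite^'n"
  assumes "det B \<noteq> 0"
  shows "matrix_inv B = (\<chi> i k. det(\<chi> i' j. if j = i then axis k 1 $ i' else B$i'$j) / det B)"
proof -
  have inv: "invertible B" using assms invertible_det_nz by blast
  have "matrix_inv B $ i $ k = det(\<chi> i' j. if j = i then axis k 1 $ i' else B$i'$j) / det B" for i k
  proof -
    have "B *v (matrix_inv B *v axis k 1) = axis k 1"
      by (simp add: matrix_vector_mul_assoc minv[OF inv])
    then have "matrix_inv B *v axis k 1 = (\<chi> i. det(\<chi> i' j. if j = i then axis k 1 $ i' else B$i'$j) / det B)"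
      using cramer[OF assms] by blast
    moreover have "(matrix_inv B *v axis k 1) $ i = matrix_inv B $ i $ k"
      by (simp add: matrix_vector_mult_basis column_def)
    ultimately show ?thesis by simp
  qed
  then show ?thesis by (simp add: vec_eq_iff)
qed

lemma isCont_minv:
  fixes A :: "real^'n::finite^'n"
  assumes "invertible A"
  shows "isCont matrix_inv A"
proof -
  have d: "det A \<noteq> 0" using assms invertible_det_nz by blast
  have "eventually (\<lambda>B. det B \<noteq> 0) (nhds A)"
  proof -
    have "isCont det A" unfolding isCont_def by (intro tendsto_det tendsto_ident_at)
    from continuous_at_avoid[OF this d] obtain e where "e > 0" "\<forall>y. dist A y < e \<longrightarrow> det y \<noteq> 0" by blast
    then show ?thesis unfolding eventually_nhds_metric by (metis dist_commute)
  qed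
  then have ev: "eventually (\<lambda>B. matrix_inv B = (\<chi> i k. det(\<chi> i' j. if j = i then axis k 1 $ i' else B$i'$j) / det B)) (nhds A)"
    by (rule eventually_mono) (rule minv_formula)
  have "isCont (\<lambda>B::real^'n^'n. (\<chi> i k. det(\<chi> i' j. if j = i then axis k 1 $ i' else B$i'$j) / det B)) A"
    unfolding isCont_def
    by (intro tendsto_intros tendsto_det d tendsto_ident_at) (auto intro!: tendsto_vec_nth tendsto_ident_at)
  then show ?thesis using isCont_cong[OF ev] by simp
qed


lemma has_derivative_cont_prod_zero:
  fixes M :: "'a::real_normed_vector \<Rightarrow> 'm::real_normed_vector" and g :: "'a \<Rightarrow> 'v::real_normed_vector" and P :: "'m \<Rightarrow> 'v \<Rightarrow> 'w::real_normed_vector"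
  assumes bb: "bounded_bilinear P" and M: "isCont M x"
    and g: "(g has_derivative g') (at x)" and g0: "g x = 0"
  shows "((\<lambda>y. P (M y) (g y)) has_derivative (\<lambda>h. P (M x) (g' h))) (at x)"
proof -
  interpret bounded_bilinear P by fact
  have bl: "bounded_linear g'" using g has_derivative_bounded_linear by blast
  then interpret g': bounded_linear g' .
  define R where "R y = ((g y - g x) - g' (y - x)) /\<^sub>R norm (y - x)" for y
  have R: "(R \<longlongrightarrow> 0) (at x)" using g unfolding has_derivative_at_within R_def by simp
  obtain K where K: "\<And>v. norm (g' v) \<le> norm v * K" "K > 0" using g'.pos_bounded by blast
  have "((\<lambda>y. norm (R y)) \<longlongrightarrow> 0) (at x)" using tendsto_norm[OF R] by simp
  then have ev: "eventually (\<lambda>y. norm (R y) < 1) (at x)"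
    by (rule order_tendstoD) simp
  have B: "Bfun (\<lambda>y. g y /\<^sub>R norm (y - x)) (at x)"
  proof (rule BfunI[where K="1 + K"])
    show "eventually (\<lambda>y. norm (g y /\<^sub>R norm (y-x)) \<le> 1 + K) (at x)"
      using ev
    proof (rule eventually_mono)
      fix y assume y: "norm (R y) < 1"
      have e: "g y /\<^sub>R norm (y-x) = R y + g' (y - x) /\<^sub>R norm (y - x)"
        by (simp add: R_def g0 scaleR_diff_right)
      have "norm (g' (y - x) /\<^sub>R norm (y - x)) \<le> K"
      proof (cases "y = x")
        case True then show ?thesis using K by simp
      next
        case False
        then have "norm (y - x) > 0" by simp
        have "norm (g' (y - x) /\<^sub>R norm (y - x)) = norm (g' (y - x)) / norm (y - x)"
          by (simp add: divide_inverse_commute)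
        also have "\<dots> \<le> K" using K(1)[of "y-x"] \<open>norm (y - x) > 0\<close>
          by (metis pos_divide_le_eq mult.commute)
        finally show ?thesis .
      qed
      then show "norm (g y /\<^sub>R norm (y-x)) \<le> 1 + K"
        unfolding e using y norm_triangle_ineq[of "R y" "g' (y - x) /\<^sub>R norm (y - x)"] by linarith
    qed
  qed
  have Z: "Zfun (\<lambda>y. M y - M x) (at x)" using M unfolding isCont_def tendsto_Zfun_iff .
  have Z2: "((\<lambda>y. P (M y - M x) (g y /\<^sub>R norm (y - x))) \<longlongrightarrow> 0) (at x)"
    using Zfun_prod_Bfun[OF Z B] tendsto_Zfun_iff by fastforce
  have T1: "((\<lambda>y. P (M x) (R y)) \<longlongrightarrow> 0) (at x)" using tendsto[OF tendsto_const R, of "M x"] by (simp add: zero_right)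
  show ?thesis unfolding has_derivative_at_within
  proof
    show "bounded_linear (\<lambda>h. P (M x) (g' h))"
      by (rule bounded_linear_compose[OF bounded_linear_right bl])
    have eq: "(P (M y) (g y) - P (M x) (g x) - P (M x) (g' (y - x))) /\<^sub>R norm (y - x)
       = P (M x) (R y) + P (M y - M x) (g y /\<^sub>R norm (y - x))" for y
      by (simp add: R_def g0 diff_left diff_right scaleR_right scaleR_diff_right zero_right algebra_simps)
    show "((\<lambda>y. (P (M y) (g y) - P (M x) (g x) - P (M x) (g' (y - x))) /\<^sub>R norm (y - x)) \<longlongrightarrow> 0) (at x within UNIV)"
      unfolding eq using tendsto_add[OF T1 Z2] by simp
  qed
qed

lemma has_derivative_vec_lambda_at:
  fixes f :: "'k::finite \<Rightarrow> 'a::real_normed_vector \<Rightarrow> real"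
  assumes "\<And>k. (f k has_derivative f' k) (at x)"
  shows "((\<lambda>y. \<chi> k. f k y) has_derivative (\<lambda>h. \<chi> k. f' k h)) (at x)"
proof -
  have e: "\<And>g. (\<chi> k. g k) = (\<Sum>k\<in>UNIV. g k *\<^sub>R axis k (1::real))"
    by (simp add: vec_eq_iff axis_def if_distrib cong: if_cong)
  show ?thesis unfolding e using assms by (auto intro!: derivative_eq_intros)
qed

lemma pd_eq:
  fixes f :: "real^'n::finite \<Rightarrow> real"
  assumes "(f has_derivative f') (at y)"
  shows "pd k f y = f' (axis k 1)"
proof -
  interpret bounded_linear f' using assms has_derivative_bounded_linear by blast
  have "((\<lambda>t. y + t *\<^sub>R axis k 1) has_derivative (\<lambda>t. t *\<^sub>R axis k 1)) (at 0)"
    by (auto intro!: derivative_eq_intros)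
  then have "((f \<circ> (\<lambda>t. y + t *\<^sub>R axis k 1)) has_derivative (f' \<circ> (\<lambda>t. t *\<^sub>R axis k 1))) (at 0)"
    using diff_chain_at[OF _ , of "\<lambda>t. y + t *\<^sub>R axis k 1" _ 0 f f'] assms by simp
  moreover have "(f' \<circ> (\<lambda>t. t *\<^sub>R axis k 1)) = (*) (f' (axis k 1))"
    by (rule ext) (simp add: scaleR)
  ultimately have "((\<lambda>t. f (y + t *\<^sub>R axis k 1)) has_real_derivative f' (axis k 1)) (at 0)"
    unfolding has_field_derivative_def by (simp add: o_def)
  then show ?thesis unfolding pd_def by (rule DERIV_imp_deriv)
qed


lemma bb_mv: "bounded_bilinear ((*v) :: real^'n::finite^'m::finite \<Rightarrow> real^'n \<Rightarrow> real^'m)"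
proof -
  have "bilinear ((*v) :: real^'n::finite^'m::finite \<Rightarrow> real^'n \<Rightarrow> real^'m)"
    unfolding bilinear_def
  proof (intro conjI allI)
    fix A :: "real^'n^'m" show "linear ((*v) A)" by simp
  next
    fix v :: "real^'n" show "linear (\<lambda>A::real^'n^'m. A *v v)"
      by (rule linearI) (simp_all add: matrix_vector_mult_add_rdistrib scaleR_matrix_vector_assoc)
  qed
  then show ?thesis using bilinear_conv_bounded_bilinear by blast
qed

lemma C2_grad:
  fixes F :: "real^'n::finite \<Rightarrow> real"
  assumes C2: "C2_on D F" and D: "open D" and x: "x \<in> D"
  shows "(grad F has_derivative (\<lambda>h. hess F x *v h)) (at x)" "isCont (hess F) x"
proof -
  obtain F' F'' where d1: "\<And>y. y \<in> D \<Longrightarrow> (F has_derivative blinfun_apply (F' y)) (at y)"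
     and d2: "\<And>y. y \<in> D \<Longrightarrow> (F' has_derivative blinfun_apply (F'' y)) (at y)"
     and c: "continuous_on D F''" using C2 unfolding C2_on_def by blast
  have pdF: "pd k F y = F' y (axis k 1)" if "y \<in> D" for y k using pd_eq[OF d1[OF that]] .
  have dpd: "(pd k F has_derivative (\<lambda>h. F'' y h (axis k 1))) (at y)" if "y \<in> D" for y k
  proof -
    have "((\<lambda>z. blinfun_apply (F' z) (axis k 1)) has_derivative (\<lambda>h. blinfun_apply (F'' y h) (axis k 1))) (at y)"
      using bounded_linear.has_derivative[OF blinfun.bounded_linear_left d2[OF that]] .
    then show ?thesis using D that by (rule has_derivative_transform_within_open) (simp add: pdF)
  qed
  have hessD: "hess F y = (\<chi> k l. F'' y (axis l 1) (axis k 1))" if "y \<in> D" for y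
    unfolding hess_def using pd_eq[OF dpd[OF that]] by simp
  define L where "L = (\<lambda>h. \<chi> k. blinfun_apply (F'' x h) (axis k 1))"
  have dg: "((\<lambda>y. \<chi> k. pd k F y) has_derivative L) (at x)"
    unfolding L_def by (rule has_derivative_vec_lambda_at) (rule dpd[OF x])
  have bl: "bounded_linear L" using dg has_derivative_bounded_linear by blast
  have "matrix L = hess F x" unfolding matrix_def L_def hessD[OF x] by simp
  then have "L = (\<lambda>h. hess F x *v h)" using matrix_vector_mul(3)[OF bl] by simp
  then show "(grad F has_derivative (\<lambda>h. hess F x *v h)) (at x)" using dg unfolding grad_def by simp
  have ev: "eventually (\<lambda>y. hess F y = (\<chi> k l. F'' y (axis l 1) (axis k 1))) (nhds x)"
    unfolding eventually_nhds using D x hessD by blast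
  have "isCont F'' x" using c D x continuous_on_eq_continuous_at by blast
  then have "isCont (\<lambda>y. (\<chi> k l. F'' y (axis l 1) (axis k 1))) x"
    unfolding isCont_def by (intro tendsto_vec_lambda blinfun.tendsto tendsto_const)
  then show "isCont (hess F) x" using isCont_cong[OF ev] by simp
qed

lemma sum_Plus_UNIV:
  "(\<Sum>k\<in>(UNIV::('c::finite+'b::finite) set). f k) = (\<Sum>i\<in>UNIV. f (Inl i)) + (\<Sum>j\<in>UNIV. f (Inr j))"
proof -
  have "(\<Sum>k\<in>(UNIV::('c::finite+'b::finite) set). f k) = (\<Sum>k\<in>(UNIV::'c set) <+> (UNIV::'b set). f k)"
    by simp
  also have "\<dots> = (\<Sum>i\<in>UNIV. f (Inl i)) + (\<Sum>j\<in>UNIV. f (Inr j))"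
    by (subst sum.Plus) (simp_all add: o_def)
  finally show ?thesis .
qed

lemma cpart_join[simp]: "cpart (join c b) = c" by (simp add: cpart_def join_def vec_eq_iff)
lemma bpart_join[simp]: "bpart (join c b) = b" by (simp add: bpart_def join_def vec_eq_iff)
lemma join_parts[simp]: "join (cpart v) (bpart v) = v"
  by (simp add: cpart_def bpart_def join_def vec_eq_iff split: sum.split)
lemma join_eq_iff: "join a b = join c d \<longleftrightarrow> a = c \<and> b = d"
  by (metis cpart_join bpart_join)
lemma cpart_lin[simp]: "cpart (u + v) = cpart u + cpart v" "cpart (u - v) = cpart u - cpart v" "cpart 0 = 0"
  by (simp_all add: cpart_def vec_eq_iff)
lemma bpart_lin[simp]: "bpart (u + v) = bpart u + bpart v" "bpart (u - v) = bpart u - bpart v" "bpart 0 = 0"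
  by (simp_all add: bpart_def vec_eq_iff)
lemma join_lin: "join a b + join c d = join (a + c) (b + d)" "join a b - join c d = join (a - c) (b - d)"
  by (simp_all add: join_def vec_eq_iff split: sum.split)

lemma hess_mult: "hess F th *v v = join (H11 F th *v cpart v + H12 F th *v bpart v) (H21 F th *v cpart v + H22 F th *v bpart v)"
  by (simp add: vec_eq_iff matrix_vector_mult_def sum_Plus_UNIV join_def H11_def H12_def H21_def H22_def
      cpart_def bpart_def split: sum.split)

lemma Bmat_mult: "Bmat F th *v v = join (H11 F th *v cpart v) (H21 F th *v cpart v + H22 F th *v bpart v)"
  by (simp add: vec_eq_iff matrix_vector_mult_def sum_Plus_UNIV join_def H11_def H12_def H21_def H22_def
      Bmat_def cpart_def bpart_def split: sum.split)

lemma has_derivative_cpart: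
  assumes "(f has_derivative f') (at x)"
  shows "((\<lambda>y. cpart (f y)) has_derivative (\<lambda>h. cpart (f' h))) (at x)"
  unfolding cpart_def
  by (rule has_derivative_vec_lambda_at) (rule bounded_linear.has_derivative[OF bounded_linear_vec_nth assms])

lemma has_derivative_bpart:
  assumes "(f has_derivative f') (at x)"
  shows "((\<lambda>y. bpart (f y)) has_derivative (\<lambda>h. bpart (f' h))) (at x)"
  unfolding bpart_def
  by (rule has_derivative_vec_lambda_at) (rule bounded_linear.has_derivative[OF bounded_linear_vec_nth assms])

lemma has_derivative_join:
  assumes "(f has_derivative f') (at x)" "(g has_derivative g') (at x)"
  shows "((\<lambda>y. join (f y) (g y)) has_derivative (\<lambda>h. join (f' h) (g' h))) (at x)"
  unfolding join_def
proof (rule has_derivative_vec_lambda_at)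
  fix k
  show "((\<lambda>y. case k of Inl i \<Rightarrow> f y $ i | Inr j \<Rightarrow> g y $ j) has_derivative
          (\<lambda>h. case k of Inl i \<Rightarrow> f' h $ i | Inr j \<Rightarrow> g' h $ j)) (at x)"
    by (cases k) (auto intro: bounded_linear.has_derivative[OF bounded_linear_vec_nth] assms)
qed

lemma isCont_blocks:
  assumes "isCont (hess F) x"
  shows "isCont (H11 F) x" "isCont (H21 F) x" "isCont (H22 F) x"
  using assms unfolding isCont_def H11_def H21_def H22_def
  by (auto intro!: tendsto_vec_lambda tendsto_vec_nth)


lemma mv_neg: "(A::real^'n::finite^'m::finite) *v (- v) = - (A *v v)"
  by (simp add: vec_eq_iff matrix_vector_mult_def sum_negf)

theorem lemma3p2:
  fixes F :: "real^('c::finite + 'b::finite) \<Rightarrow> real"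
    and D Os :: "(real^('c + 'b)) set"
    and s :: scheme
    and th0 :: "real^('c + 'b)"
  assumes dim: "CARD('c) = CARD('b) + 1"
    and D_open: "open D"
    and F_C2: "C2_on D F"
    and O_open: "open Os"
    and O_sub: "Os \<subseteq> D"
    and invert: "inv_assm s F D Os"
    and th0_in: "th0 \<in> Os"
    and fixp: "Gmap s F th0 = th0"
    and spd: "sym_pos_def (hess F th0)"
  shows "(Gmap s F has_derivative
           (\<lambda>h. (mat 1 - matrix_inv (Bmat F th0) ** hess F th0) *v h)) (at th0)"
proof -
  have th0D: "th0 \<in> D" using O_sub th0_in by blast
  note dG = C2_grad(1)[OF F_C2 D_open th0D]
  note cH = C2_grad(2)[OF F_C2 D_open th0D]
  define H where "H = hess F th0"
  define M1 where "M1 = matrix_inv (H11 F th0)"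
  define M2 where "M2 = matrix_inv (H22 F th0)"
  have inv11: "invertible (H11 F th0)" using invert th0_in by (cases s) auto
  have G1th: "G1 F th0 = cpart th0" using fixp unfolding Gmap_def by (metis cpart_join)
  have gc0: "grad_c F th0 = 0"
  proof -
    have "M1 *v grad_c F th0 = 0" using G1th unfolding G1_def M1_def by simp
    then have "H11 F th0 *v (M1 *v grad_c F th0) = 0" by simp
    then show ?thesis by (simp add: matrix_vector_mul_assoc M1_def minv[OF inv11])
  qed
  have gcf: "grad_c F = (\<lambda>y. cpart (grad F y))" by (rule ext) (simp add: grad_c_def)
  have gbf: "grad_b F = (\<lambda>y. bpart (grad F y))" by (rule ext) (simp add: grad_b_def)
  have dgc: "(grad_c F has_derivative (\<lambda>h. cpart (H *v h))) (at th0)"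
    unfolding gcf H_def by (rule has_derivative_cpart[OF dG])
  have dgb: "(grad_b F has_derivative (\<lambda>h. bpart (H *v h))) (at th0)"
    unfolding gbf H_def by (rule has_derivative_bpart[OF dG])
  have cM1: "isCont (\<lambda>y. matrix_inv (H11 F y)) th0"
    by (rule isCont_o2[OF isCont_blocks(1)[OF cH] isCont_minv[OF inv11]])
  have dP1: "((\<lambda>y. matrix_inv (H11 F y) *v grad_c F y) has_derivative (\<lambda>h. M1 *v cpart (H *v h))) (at th0)"
    unfolding M1_def by (rule has_derivative_cont_prod_zero[OF bb_mv cM1 dgc gc0])
  define U where "U h = M1 *v cpart (H *v h)" for h
  define DG1 where "DG1 h = cpart h - U h" for h
  have dG1: "(G1 F has_derivative DG1) (at th0)"
  proof -
    have "G1 F = (\<lambda>y. cpart y - matrix_inv (H11 F y) *v grad_c F y)" by (rule ext) (simp add: G1_def)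
    then show ?thesis unfolding DG1_def[abs_def] U_def
      using has_derivative_diff[OF has_derivative_cpart[OF has_derivative_ident] dP1] by simp
  qed
  have dG1c: "((\<lambda>y. G1 F y - cpart y) has_derivative (\<lambda>h. - U h)) (at th0)"
    using has_derivative_diff[OF dG1 has_derivative_cpart[OF has_derivative_ident]] by (simp add: DG1_def)
  define W where "W h = M2 *v (bpart (H *v h) - H21 F th0 *v U h)" for h
  have dG2: "(G2 s F has_derivative (\<lambda>h. bpart h - W h)) (at th0)" and inv22: "invertible (H22 F th0)"
  proof -
    have "(G2 s F has_derivative (\<lambda>h. bpart h - W h)) (at th0) \<and> invertible (H22 F th0)"
    proof (cases s)
      case LGS
      have inv22: "invertible (H22 F th0)" using invert th0_in LGS by auto
      have "M2 *v (grad_b F th0 + H21 F th0 *v (G1 F th0 - cpart th0)) = 0"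
      proof -
        have "G2 LGS F th0 = bpart th0" using fixp LGS unfolding Gmap_def by (metis bpart_join)
        then show ?thesis unfolding M2_def by simp
      qed
      then have "M2 *v grad_b F th0 = 0" using G1th by simp
      then have "H22 F th0 *v (M2 *v grad_b F th0) = 0" by simp
      then have gb0: "grad_b F th0 = 0" by (simp add: matrix_vector_mul_assoc M2_def minv[OF inv22])
      have dK2: "((\<lambda>y. H21 F y *v (G1 F y - cpart y)) has_derivative (\<lambda>h. H21 F th0 *v (- U h))) (at th0)"
        by (rule has_derivative_cont_prod_zero[OF bb_mv isCont_blocks(2)[OF cH] dG1c]) (simp add: G1th)
      have dK: "((\<lambda>y. grad_b F y + H21 F y *v (G1 F y - cpart y)) has_derivative
                 (\<lambda>h. bpart (H *v h) + H21 F th0 *v (- U h))) (at th0)"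
        by (rule has_derivative_add[OF dgb dK2])
      have cM2: "isCont (\<lambda>y. matrix_inv (H22 F y)) th0"
        by (rule isCont_o2[OF isCont_blocks(3)[OF cH] isCont_minv[OF inv22]])
      have dP2: "((\<lambda>y. matrix_inv (H22 F y) *v (grad_b F y + H21 F y *v (G1 F y - cpart y))) has_derivative
                 (\<lambda>h. M2 *v (bpart (H *v h) + H21 F th0 *v (- U h)))) (at th0)"
        unfolding M2_def by (rule has_derivative_cont_prod_zero[OF bb_mv cM2 dK]) (simp add: gb0 G1th)
      have e: "G2 s F = (\<lambda>y. bpart y - matrix_inv (H22 F y) *v (grad_b F y + H21 F y *v (G1 F y - cpart y)))"
        by (rule ext) (simp add: LGS)
      have "(G2 s F has_derivative (\<lambda>h. bpart h - M2 *v (bpart (H *v h) + H21 F th0 *v (- U h)))) (at th0)"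
        unfolding e by (rule has_derivative_diff[OF has_derivative_bpart[OF has_derivative_ident] dP2])
      moreover have "(\<lambda>h. bpart h - M2 *v (bpart (H *v h) + H21 F th0 *v (- U h))) = (\<lambda>h. bpart h - W h)"
        by (rule ext) (simp add: W_def mv_neg algebra_simps)
      ultimately show ?thesis using inv22 by simp
    next
      case NLGS
      define psi where "psi y = join (G1 F y) (bpart y)" for y
      have psi0: "psi th0 = th0" by (simp add: psi_def G1th)
      have inv22: "invertible (H22 F th0)" using invert th0_in NLGS psi0 unfolding psi_def by auto
      have dpsi: "(psi has_derivative (\<lambda>h. join (DG1 h) (bpart h))) (at th0)"
        unfolding psi_def[abs_def] by (rule has_derivative_join[OF dG1 has_derivative_bpart[OF has_derivative_ident]])
      have "M2 *v grad_b F th0 = 0"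
      proof -
        have "G2 NLGS F th0 = bpart th0" using fixp NLGS unfolding Gmap_def by (metis bpart_join)
        then show ?thesis using psi0 unfolding M2_def psi_def by simp
      qed
      then have "H22 F th0 *v (M2 *v grad_b F th0) = 0" by simp
      then have gb0: "grad_b F th0 = 0" by (simp add: matrix_vector_mul_assoc M2_def minv[OF inv22])
      have dgbp: "((\<lambda>y. grad_b F (psi y)) has_derivative (\<lambda>h. bpart (H *v join (DG1 h) (bpart h)))) (at th0)"
        using diff_chain_at[OF dpsi, of "grad_b F"] dgb psi0 by (simp add: o_def)
      have cpsi: "isCont psi th0" using dpsi has_derivative_continuous by blast
      have cH22: "isCont (\<lambda>y. H22 F (psi y)) th0"
        using isCont_o2[OF cpsi, of "H22 F"] isCont_blocks(3)[OF cH] psi0 by simp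
      have cM2: "isCont (\<lambda>y. matrix_inv (H22 F (psi y))) th0"
        using isCont_o2[OF cH22, of matrix_inv] isCont_minv[OF inv22] psi0 by simp
      have dP2: "((\<lambda>y. matrix_inv (H22 F (psi y)) *v grad_b F (psi y)) has_derivative
                 (\<lambda>h. M2 *v bpart (H *v join (DG1 h) (bpart h)))) (at th0)"
        using has_derivative_cont_prod_zero[OF bb_mv cM2 dgbp] psi0 gb0 unfolding M2_def by simp
      have e: "G2 s F = (\<lambda>y. bpart y - matrix_inv (H22 F (psi y)) *v grad_b F (psi y))"
        by (rule ext) (simp add: NLGS psi_def)
      have "(G2 s F has_derivative (\<lambda>h. bpart h - M2 *v bpart (H *v join (DG1 h) (bpart h)))) (at th0)"
        unfolding e by (rule has_derivative_diff[OF has_derivative_bpart[OF has_derivative_ident] dP2])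
      moreover have "(\<lambda>h. bpart h - M2 *v bpart (H *v join (DG1 h) (bpart h))) = (\<lambda>h. bpart h - W h)"
        by (rule ext) (simp add: W_def DG1_def H_def hess_mult algebra_simps)
      ultimately show ?thesis using inv22 by simp
    qed
    then show "(G2 s F has_derivative (\<lambda>h. bpart h - W h)) (at th0)" "invertible (H22 F th0)" by auto
  qed
  have dGm: "(Gmap s F has_derivative (\<lambda>h. join (DG1 h) (bpart h - W h))) (at th0)"
  proof -
    have "Gmap s F = (\<lambda>y. join (G1 F y) (G2 s F y))" by (rule ext) (simp add: Gmap_def)
    then show ?thesis using has_derivative_join[OF dG1 dG2] by simp
  qed
  define B where "B = Bmat F th0"
  have invB: "invertible B"
  proof -
    have "\<forall>z. B *v z = 0 \<longrightarrow> z = 0"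
    proof (intro allI impI)
      fix z assume z: "B *v z = 0"
      then have "join (H11 F th0 *v cpart z) (H21 F th0 *v cpart z + H22 F th0 *v bpart z) = join 0 0"
        unfolding B_def Bmat_mult by (metis bpart_lin(3) cpart_lin(3) join_parts)
      then have z1: "H11 F th0 *v cpart z = 0" and z2: "H21 F th0 *v cpart z + H22 F th0 *v bpart z = 0"
        unfolding join_eq_iff by auto
      from z1 have "matrix_inv (H11 F th0) *v (H11 F th0 *v cpart z) = 0" by simp
      then have c0: "cpart z = 0" by (simp add: matrix_vector_mul_assoc minv[OF inv11])
      with z2 have "matrix_inv (H22 F th0) *v (H22 F th0 *v bpart z) = 0" by simp
      then have b0: "bpart z = 0" by (simp add: matrix_vector_mul_assoc minv[OF inv22])
      show "z = 0" using c0 b0 join_parts[of z] by (metis bpart_lin(3) cpart_lin(3) join_parts)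
    qed
    then show ?thesis using matrix_left_invertible_ker invertible_left_inverse by blast
  qed
  have key: "join (DG1 h) (bpart h - W h) = (mat 1 - matrix_inv B ** H) *v h" for h
  proof -
    define y where "y = join (U h) (W h)"
    have "H11 F th0 *v U h = cpart (H *v h)"
      by (simp add: U_def matrix_vector_mul_assoc M1_def minv[OF inv11])
    moreover have "H22 F th0 *v W h = bpart (H *v h) - H21 F th0 *v U h"
      by (simp add: W_def matrix_vector_mul_assoc M2_def minv[OF inv22])
    ultimately have By: "B *v y = H *v h"
      unfolding B_def y_def Bmat_mult by simp
    have "matrix_inv B *v (H *v h) = y"
      unfolding By[symmetric] by (simp add: matrix_vector_mul_assoc minv[OF invB])
    then have "(mat 1 - matrix_inv B ** H) *v h = h - y"
      by (simp add: matrix_vector_mult_diff_rdistrib matrix_vector_mul_assoc[symmetric])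
    also have "h - y = join (DG1 h) (bpart h - W h)"
      unfolding y_def DG1_def by (metis join_lin(2) join_parts)
    finally show ?thesis by simp
  qed
  show ?thesis using dGm unfolding key B_def H_def .
qed

end
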